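(* In the setting of problem (P) with $f_0(x)=\mathbb{E}_\xi[F(x,\xi)]$, run Algorithm LCSPG with parameters $\gamma_k>L_0/2$. Then for every $k$ the $k$-th subproblem admits a Lagrange multiplier $\lambda^{k+1}\in\mathbb{R}^m_+$ (KKT conditions with $\psi_0^k$ as defined in LCSPG), and for any $\beta_k\in(0,2\gamma_k-L_0)$, $$\psi_0(x^{k+1})\le\psi_0(x^k)-\frac{2\gamma_k-\beta_k-L_0}{2}\|x^{k+1}-x^k\|^2+\frac{\|\zeta^k\|^2}{2\beta_k},$$ where $\zeta^k:=G^k-\nabla f_0(x^k)$.
   Context: Problem (P): minimize $\psi_0(x):=f_0(x)+\chi_0(x)$ over $x\in\mathbb{R}^d$ subject to $\psi_i(x):=f_i(x)+\chi_i(x)\le\eta_i$, $i\in[m]:=\{1,\dots,m\}$. Standing assumptions: $\chi_0$ is proper, convex, lower semicontinuous; each $\chi_i$ ($i\in[m]$) is convex and continuous on $\mathrm{dom}\,\chi_0$; each $f_i$ ($i=0,\dots,m$) is differentiable with $L_i$-Lipschitz gradient on $\mathrm{dom}\,\chi_0$; $L:=(L_1,\dots,L_m)^\top$; the optimal value $\psi_0^*$ of (P) is finite; the feasible set $\mathcal{X}:=\{x\in\mathrm{dom}\,\chi_0:\psi_i(x)\le\eta_i,\ i\in[m]\}$ is nonempty and compact. Vector inequalities are componentwise. Stochastic setting: $f_0(x)=\mathbb{E}_\xi[F(x,\xi)]$ with $F(\cdot,\xi)$ differentiable; a stochastic first-order oracle returns $\nabla F(x,\xi)$ with $\mathbb{E}[\nabla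 F(x,\xi)]=\nabla f_0(x)$ and $\mathbb{E}\|\nabla F(x,\xi)-\nabla f_0(x)\|^2\le\sigma^2$. Algorithm LCSPG: given $x^0\in\mathrm{dom}\,\chi_0$, $\eta^0$ with $\psi(x^0)<\eta^0<\eta$, batch sizes $b_k$, $\gamma_k>0$. At step $k$: draw $b_k$ i.i.d. samples $\xi_{1,k},\dots,\xi_{b_k,k}$ and set $G^k=\frac1{b_k}\sum_{j}\nabla F(x^k,\xi_{j,k})$; set $\psi_0^k(x)=\langle G^k,x\rangle+\frac{\gamma_k}{2}\|x-x^k\|^2+\chi_0(x)$ and, for $i\in[m]$, $\psi_i^k(x)=f_i(x^k)+\langle\nabla f_i(x^k),x-x^k\rangle+\frac{L_i}{2}\|x-x^k\|^2+\chi_i(x)$; let $x^{k+1}$ minimize $\psi_0^k$ subject to $\psi_i^k(x)\le\eta_i^k$, $i\in[m]$; set $\eta^{k+1}=\eta^k+\delta^k$ with $\delta^k>0$ and $\eta^{k+1}<\eta$. A Lagrange multiplier $\lambda^{k+1}\in\mathbb{R}^m_+$ satisfies $0\in\partial\psi_0^k(x^{k+1})+\sum_i\lambda_i^{k+1}\partial\psi_i^k(x^{k+1})$ and $\lambda_i^{k+1}(\psi_i^k(x^{k+1})-\eta_i^k)=0$. *)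

theory Defs
  imports "HOL-Analysis.Analysis" "HOL-Probability.Probability"
begin

text \<open>Subdifferential of a convex function h that is finite on S and equal to +infinity
  outside S (for a real-valued function on the whole space take S = UNIV).\<close>
definition subdiff :: "'a set \<Rightarrow> ('a::real_inner \<Rightarrow> real) \<Rightarrow> 'a \<Rightarrow> 'a set" where
  "subdiff S h x = {g. \<forall>y\<in>S. h x + inner g (y - x) \<le> h y}"

text \<open>A proper, convex, lower semicontinuous extended-real function, represented by its
  effective domain D and its (finite) values on D; it is +infinity outside D.\<close>
definition proper_convex_lsc :: "'a::real_normed_vector set \<Rightarrow> ('a \<Rightarrow> real) \<Rightarrow> bool" where
  "proper_convex_lsc D h \<longleftrightarrow> D \<noteq> {} \<and> convex D \<and> convex_on D h \<and>
     closed {(x, t). x \<in> D \<and> h x \<le> t}"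

definition obj_model :: "'a \<Rightarrow> real \<Rightarrow> 'a \<Rightarrow> ('a \<Rightarrow> real) \<Rightarrow> 'a::real_inner \<Rightarrow> real" where
  "obj_model G \<gamma> xk \<chi>0 y = inner G y + \<gamma> / 2 * (norm (y - xk))\<^sup>2 + \<chi>0 y"

definition con_model :: "('a \<Rightarrow> real) \<Rightarrow> 'a \<Rightarrow> real \<Rightarrow> ('a \<Rightarrow> real) \<Rightarrow> 'a \<Rightarrow> 'a::real_inner \<Rightarrow> real" where
  "con_model fi gi Li \<chi>i xk y = fi xk + inner gi (y - xk) + Li / 2 * (norm (y - xk))\<^sup>2 + \<chi>i y"

end

theory Submission imports Defs begin

lemma sub2:
  fixes p q :: "'a::euclidean_space \<Rightarrow> real"
  assumes cD: "convex D" and cp: "convex_on D p" and cq: "convex_on UNIV q" and xD: "x \<in> D"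
    and opt: "\<forall>y\<in>D. p x + q x \<le> p y + q y"
  shows "\<exists>a. a \<in> subdiff D p x \<and> -a \<in> subdiff UNIV q x"
proof -
  define S where "S = {(y,t). y \<in> D \<and> p y - p x \<le> t}"
  define T where "T = {(y,t). t < q x - q y}"
  have convS: "convex S"
    unfolding convex_def S_def
  proof (clarsimp)
    fix y1 t1 y2 t2 and u v :: real
    assume h: "y1 \<in> D" "p y1 - p x \<le> t1" "y2 \<in> D" "p y2 - p x \<le> t2" "0 \<le> u" "0 \<le> v" "u + v = 1"
    have "u *\<^sub>R y1 + v *\<^sub>R y2 \<in> D" using cD h by (simp add: convexD)
    moreover have "p (u *\<^sub>R y1 + v *\<^sub>R y2) \<le> u * p y1 + v * p y2"
      using cp h unfolding convex_on_def by blast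
    moreover have "u * p y1 \<le> u * (t1 + p x)" "v * p y2 \<le> v * (t2 + p x)"
      using h by (auto intro: mult_left_mono)
    moreover have "u * p x + v * p x = p x" using h by (metis distrib_right mult_1)
    ultimately show "u *\<^sub>R y1 + v *\<^sub>R y2 \<in> D \<and> p (u *\<^sub>R y1 + v *\<^sub>R y2) - p x \<le> u * t1 + v * t2"
      using h by (auto simp: algebra_simps)
  qed
  have convT: "convex T"
    unfolding convex_def T_def
  proof (clarsimp)
    fix y1 t1 y2 t2 and u v :: real
    assume h: "t1 < q x - q y1" "t2 < q x - q y2" "0 \<le> u" "0 \<le> v" "u + v = 1"
    have "q (u *\<^sub>R y1 + v *\<^sub>R y2) \<le> u * q y1 + v * q y2"
      using cq h unfolding convex_on_def by blast
    moreover have "u * t1 + v * t2 < u * (q x - q y1) + v * (q x - q y2)"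
    proof (cases "u = 0")
      case True then show ?thesis using h by auto
    next
      case False
      then have "u * t1 < u * (q x - q y1)" using h by auto
      moreover have "v * t2 \<le> v * (q x - q y2)" using h by (auto intro: mult_left_mono)
      ultimately show ?thesis by linarith
    qed
    moreover have "u * q x + v * q x = q x" using h by (metis distrib_right mult_1)
    ultimately show "u * t1 + v * t2 < q x - q (u *\<^sub>R y1 + v *\<^sub>R y2)"
      using h by (auto simp: algebra_simps)
  qed
  have neS: "S \<noteq> {}" using xD unfolding S_def by auto
  have neT: "T \<noteq> {}" unfolding T_def by (auto intro!: exI[of _ x] exI[of _ "-1::real"])
  have disj: "S \<inter> T = {}"
  proof (rule ccontr)
    assume "S \<inter> T \<noteq> {}"
    then obtain y t where "y \<in> D" "p y - p x \<le> t" "t < q x - q y" unfolding S_def T_def by auto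
    with opt show False by force
  qed
  obtain a' b where a'0: "a' \<noteq> 0" and hS: "\<forall>z\<in>S. inner a' z \<le> b" and hT: "\<forall>z\<in>T. inner a' z \<ge> b"
    using separating_hyperplane_sets[OF convS convT neS neT disj] by blast
  obtain a \<alpha> where a': "a' = (a, \<alpha>)" by (cases a')
  have S': "inner a y + \<alpha> * t \<le> b" if "y \<in> D" "p y - p x \<le> t" for y t
    using hS that unfolding S_def a' by (auto simp: inner_prod_def)
  have T': "inner a y + \<alpha> * t \<ge> b" if "t < q x - q y" for y t
    using hT that unfolding T_def a' by (auto simp: inner_prod_def)
  have al: "\<alpha> \<le> 0"
  proof (rule ccontr)
    assume "\<not> \<alpha> \<le> 0"
    then have "\<alpha> > 0" by simp
    define t where "t = max 0 ((b - inner a x) / \<alpha> + 1)"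
    have "inner a x + \<alpha> * t \<le> b" using S'[OF xD, of t] by (simp add: t_def)
    moreover have "\<alpha> * t \<ge> \<alpha> * ((b - inner a x) / \<alpha> + 1)"
      using \<open>\<alpha> > 0\<close> by (simp add: t_def)
    moreover have "\<alpha> * ((b - inner a x) / \<alpha> + 1) = b - inner a x + \<alpha>"
      using \<open>\<alpha> > 0\<close> by (simp add: field_simps)
    ultimately show False using \<open>\<alpha> > 0\<close> by linarith
  qed
  have al2: "\<alpha> \<noteq> 0"
  proof
    assume "\<alpha> = 0"
    then have a0: "a \<noteq> 0" using a'0 a' by (auto simp: zero_prod_def)
    have "inner a y \<ge> b" for y using T'[of "q x - q y - 1" y] \<open>\<alpha> = 0\<close> by simp
    from this[of "((b - 1) / inner a a) *\<^sub>R a"] a0 show False by simp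
  qed
  have aln: "\<alpha> < 0" using al al2 by simp
  define e where "e = (1 / (- \<alpha>)) *\<^sub>R a"
  define b' where "b' = b / (- \<alpha>)"
  have S2: "inner e y - t \<le> b'" if "y \<in> D" "p y - p x \<le> t" for y t
  proof -
    have "inner a y + \<alpha> * t \<le> b" by (rule S'[OF that])
    then have "(inner a y + \<alpha> * t) / (- \<alpha>) \<le> b / (-\<alpha>)" by (intro divide_right_mono) (use aln in auto)
    moreover have "(inner a y + \<alpha> * t) / (- \<alpha>) = inner e y - t"
      using aln unfolding e_def by (simp add: field_simps)
    ultimately show ?thesis unfolding b'_def by linarith
  qed
  have T2: "inner e y - t \<ge> b'" if "t < q x - q y" for y t
  proof -
    have "inner a y + \<alpha> * t \<ge> b" by (rule T'[OF that])
    then have "(inner a y + \<alpha> * t) / (- \<alpha>) \<ge> b / (-\<alpha>)" by (intro divide_right_mono) (use aln in auto)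
    moreover have "(inner a y + \<alpha> * t) / (- \<alpha>) = inner e y - t"
      using aln unfolding e_def by (simp add: field_simps)
    ultimately show ?thesis unfolding b'_def by linarith
  qed
  have T3: "inner e y - (q x - q y) \<ge> b'" for y
  proof (rule ccontr)
    assume nt: "\<not> ?thesis"
    define \<delta> where "\<delta> = (b' - (inner e y - (q x - q y))) / 2"
    have "\<delta> > 0" using nt by (simp add: \<delta>_def)
    have "inner e y - (q x - q y - \<delta>) \<ge> b'" by (rule T2) (use \<open>\<delta> > 0\<close> in simp)
    then show False using nt unfolding \<delta>_def by (simp add: field_simps)
  qed
  have "inner e x \<le> b'" using S2[OF xD, of 0] by simp
  moreover have "inner e x \<ge> b'" using T3[of x] by simp
  ultimately have bb: "b' = inner e x" by simp
  have "e \<in> subdiff D p x"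
    unfolding subdiff_def
  proof (clarify)
    fix y assume "y \<in> D"
    from S2[OF this, of "p y - p x"] bb show "p x + inner e (y - x) \<le> p y" by (simp add: inner_diff_right)
  qed
  moreover have "-e \<in> subdiff UNIV q x"
    unfolding subdiff_def
  proof (clarify)
    fix y
    from T3[of y] bb show "q x + inner (-e) (y - x) \<le> q y" by (simp add: inner_diff_right)
  qed
  ultimately show ?thesis by blast
qed

lemma subdiff_ne:
  fixes q :: "'a::euclidean_space \<Rightarrow> real"
  assumes cq: "convex_on UNIV q"
  shows "\<exists>g. g \<in> subdiff UNIV q x"
proof -
  have "\<exists>a. a \<in> subdiff {x} (\<lambda>_. 0) x \<and> -a \<in> subdiff UNIV q x"
    by (rule sub2) (auto simp: cq convex_on_const)
  then show ?thesis by blast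
qed

lemma convex_on_sum_fun:
  assumes "finite I" "convex D" "\<forall>i\<in>I. convex_on D (q i)" "\<forall>i\<in>I. 0 \<le> l i"
  shows "convex_on D (\<lambda>y. \<Sum>i\<in>I. l i * q i y)"
  using assms
proof (induction I rule: finite_induct)
  case empty then show ?case by (simp add: convex_on_const)
next
  case (insert j I)
  then have "convex_on D (\<lambda>y. l j * q j y + (\<Sum>i\<in>I. l i * q i y))"
    by (intro convex_on_add convex_on_cmul) auto
  then show ?case using insert by simp
qed

lemma subsum:
  fixes p :: "'a::euclidean_space \<Rightarrow> real"
  assumes "finite I" "convex D" "convex_on D p" "\<forall>i\<in>I. convex_on UNIV (q i)" "\<forall>i\<in>I. 0 \<le> l i" "x \<in> D"
    "\<forall>y\<in>D. p x + (\<Sum>i\<in>I. l i * q i x) \<le> p y + (\<Sum>i\<in>I. l i * q i y)"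
  shows "\<exists>g0 g. g0 \<in> subdiff D p x \<and> (\<forall>i\<in>I. g i \<in> subdiff UNIV (q i) x) \<and> g0 + (\<Sum>i\<in>I. l i *\<^sub>R g i) = 0"
  using assms
proof (induction I arbitrary: p rule: finite_induct)
  case empty
  then have "p x \<le> p y" if "y \<in> D" for y using that by auto
  then have "0 \<in> subdiff D p x" unfolding subdiff_def by auto
  then show ?case by auto
next
  case (insert j I)
  define p2 where "p2 = (\<lambda>y. p y + (\<Sum>i\<in>I. l i * q i y))"
  have cI: "convex_on D (\<lambda>y. \<Sum>i\<in>I. l i * q i y)"
    by (rule convex_on_sum_fun) (use insert in \<open>auto intro: convex_on_subset\<close>)
  have cp2: "convex_on D p2" unfolding p2_def using insert cI by (intro convex_on_add) auto
  have cqj: "convex_on UNIV (\<lambda>y. l j * q j y)" using insert by (intro convex_on_cmul) auto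
  have opt2: "\<forall>y\<in>D. p2 x + l j * q j x \<le> p2 y + l j * q j y"
    using insert.prems(6) insert(1,2) unfolding p2_def by (simp add: algebra_simps)
  obtain a where a1: "a \<in> subdiff D p2 x" and a2: "-a \<in> subdiff UNIV (\<lambda>y. l j * q j y) x"
    using sub2[OF insert.prems(1) cp2 cqj insert.prems(5) opt2] by blast
  define p3 where "p3 = (\<lambda>y. p y - inner a y)"
  have cp3: "convex_on D p3" unfolding p3_def
  proof (rule convex_on_diff)
    show "convex_on D p" by fact
    show "concave_on D (inner a)" unfolding concave_on_iff using insert.prems(1)
      by (auto simp: inner_add_right)
  qed
  have opt3: "\<forall>y\<in>D. p3 x + (\<Sum>i\<in>I. l i * q i x) \<le> p3 y + (\<Sum>i\<in>I. l i * q i y)"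
    using a1 unfolding subdiff_def p2_def p3_def by (auto simp: inner_diff_right algebra_simps)
  obtain g0 g where g0: "g0 \<in> subdiff D p3 x" and g: "\<forall>i\<in>I. g i \<in> subdiff UNIV (q i) x"
    and gs: "g0 + (\<Sum>i\<in>I. l i *\<^sub>R g i) = 0"
    using insert.IH[OF insert.prems(1) cp3 _ _ insert.prems(5) opt3] insert.prems(3,4) by auto
  have g0': "g0 + a \<in> subdiff D p x"
    using g0 unfolding subdiff_def p3_def by (auto simp: inner_diff_right algebra_simps)
  obtain gj where gj: "gj \<in> subdiff UNIV (q j) x" and gja: "l j *\<^sub>R gj = - a"
  proof (cases "l j = 0")
    case True
    have "inner (-a) (y - x) \<le> 0" for y
      using a2 True unfolding subdiff_def by auto
    from this[of "x - a"] have "a = 0" using inner_ge_zero[of a] inner_eq_zero_iff[of a] by simp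
    moreover obtain gj where "gj \<in> subdiff UNIV (q j) x" using subdiff_ne insert.prems(3) by blast
    ultimately show ?thesis using that True by simp
  next
    case False
    then have lpos: "l j > 0" using insert.prems(4) by simp
    have "(1 / l j) *\<^sub>R (-a) \<in> subdiff UNIV (q j) x"
      unfolding subdiff_def
    proof (clarify)
      fix y
      have "l j * q j x + inner (-a) (y - x) \<le> l j * q j y" using a2 unfolding subdiff_def by auto
      then have "(l j * q j x + inner (-a) (y - x)) / l j \<le> (l j * q j y) / l j"
        by (intro divide_right_mono) (use lpos in auto)
      then show "q j x + inner ((1 / l j) *\<^sub>R (-a)) (y - x) \<le> q j y"
        using lpos by (simp add: diff_divide_distrib)
    qed
    then show ?thesis using that lpos by simp
  qed
  define g' where "g' = g(j := gj)"
  have "(\<Sum>i\<in>insert j I. l i *\<^sub>R g' i) = l j *\<^sub>R gj + (\<Sum>i\<in>I. l i *\<^sub>R g i)"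
    using insert(1,2) unfolding g'_def by (auto intro!: sum.cong)
  then have "g0 + a + (\<Sum>i\<in>insert j I. l i *\<^sub>R g' i) = (g0 + (\<Sum>i\<in>I. l i *\<^sub>R g i)) + (a + l j *\<^sub>R gj)"
    by (simp add: algebra_simps)
  then have "g0 + a + (\<Sum>i\<in>insert j I. l i *\<^sub>R g' i) = 0" using gs gja by simp
  moreover have "\<forall>i\<in>insert j I. g' i \<in> subdiff UNIV (q i) x" using g gj unfolding g'_def by auto
  ultimately show ?case using g0' by blast
qed

lemma lagr1:
  fixes p c :: "'a::real_vector \<Rightarrow> real"
  assumes cD: "convex D" and cp: "convex_on D p" and cc: "convex_on D c" and xs: "xs \<in> D" "c xs \<le> 0"
    and opt: "\<forall>y\<in>D. c y \<le> 0 \<longrightarrow> p xs \<le> p y" and xb: "xb \<in> D" "c xb < 0"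
  shows "\<exists>l\<ge>0. l * c xs = 0 \<and> (\<forall>y\<in>D. p xs \<le> p y + l * c y)"
proof -
  have key: "(p xs - p y) / c y \<le> (p z - p xs) / (- c z)"
    if y: "y \<in> D" "c y > 0" and z: "z \<in> D" "c z < 0" for y z
  proof -
    define \<theta> where "\<theta> = - c z / (c y - c z)"
    have th: "0 \<le> \<theta>" "\<theta> \<le> 1" using y z by (auto simp: \<theta>_def field_simps)
    define w where "w = (1 - \<theta>) *\<^sub>R z + \<theta> *\<^sub>R y"
    have wD: "w \<in> D" unfolding w_def using cD y z th by (simp add: convex_alt)
    have "c w \<le> (1 - \<theta>) * c z + \<theta> * c y" unfolding w_def using convex_onD[OF cc] th y z by blast
    also have "\<dots> = 0" using y z by (simp add: \<theta>_def field_simps)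
    finally have "p xs \<le> p w" using opt wD by blast
    also have "p w \<le> (1 - \<theta>) * p z + \<theta> * p y" unfolding w_def using convex_onD[OF cp] th y z by blast
    finally have h: "p xs \<le> (1 - \<theta>) * p z + \<theta> * p y" .
    have pos: "c y - c z > 0" using y z by simp
    have "(c y - c z) * p xs \<le> (c y - c z) * ((1 - \<theta>) * p z + \<theta> * p y)"
      using h pos by (simp add: mult_left_mono)
    also have "\<dots> = ((c y - c z) * (1 - \<theta>)) * p z + ((c y - c z) * \<theta>) * p y"
      by (simp add: algebra_simps)
    also have "(c y - c z) * (1 - \<theta>) = c y" using pos by (simp add: \<theta>_def field_simps)
    also have "(c y - c z) * \<theta> = - c z" using pos by (simp add: \<theta>_def field_simps)
    finally have "(c y - c z) * p xs \<le> c y * p z - c z * p y" by simp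
    then show ?thesis using y z by (simp add: field_simps)
  qed
  define S1 where "S1 = {(p xs - p y) / c y | y. y \<in> D \<and> c y > 0}"
  define l where "l = (if S1 = {} then 0 else max 0 (Sup S1))"
  have l0: "l \<ge> 0" unfolding l_def by auto
  have bdd: "bdd_above S1" unfolding S1_def bdd_above_def using key[OF _ _ xb] by blast
  have up: "l \<le> (p z - p xs) / (- c z)" if z: "z \<in> D" "c z < 0" for z
  proof -
    have r0: "0 \<le> (p z - p xs) / (- c z)" by (intro divide_nonneg_pos) (use opt z in auto)
    show ?thesis
    proof (cases "S1 = {}")
      case True then show ?thesis using r0 unfolding l_def by simp
    next
      case False
      have "Sup S1 \<le> (p z - p xs) / (- c z)"
        by (rule cSup_least[OF False]) (use key z in \<open>auto simp: S1_def\<close>)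
      then show ?thesis using False r0 unfolding l_def by simp
    qed
  qed
  have lo: "(p xs - p y) / c y \<le> l" if y: "y \<in> D" "c y > 0" for y
  proof -
    have mem: "(p xs - p y) / c y \<in> S1" using y unfolding S1_def by blast
    then have "S1 \<noteq> {}" by auto
    moreover have "(p xs - p y) / c y \<le> Sup S1" by (rule cSup_upper[OF mem bdd])
    ultimately show ?thesis unfolding l_def by simp
  qed
  have all: "\<forall>y\<in>D. p xs \<le> p y + l * c y"
  proof
    fix y assume yD: "y \<in> D"
    consider "c y > 0" | "c y = 0" | "c y < 0" by linarith
    then show "p xs \<le> p y + l * c y"
    proof cases
      case 1
      have "(p xs - p y) / c y \<le> l" by (rule lo[OF yD 1])
      then have "p xs - p y \<le> l * c y" using 1 by (simp add: divide_le_eq)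
      then show ?thesis by simp
    next
      case 2 then show ?thesis using opt yD by simp
    next
      case 3
      have "l \<le> (p y - p xs) / (- c y)" by (rule up[OF yD 3])
      then have "l * (- c y) \<le> (p y - p xs) / (- c y) * (- c y)"
        by (rule mult_right_mono) (use 3 in simp)
      then have "l * (- c y) \<le> p y - p xs" using 3 by simp
      then show ?thesis by (simp add: algebra_simps)
    qed
  qed
  have "l * c xs = 0"
  proof (cases "c xs < 0")
    case True
    have "l \<le> (p xs - p xs) / (- c xs)" by (rule up[OF xs(1) True])
    then have "l = 0" using l0 by simp
    then show ?thesis by simp
  next
    case False then show ?thesis using xs by simp
  qed
  then show ?thesis using l0 all by blast
qed

lemma convex_sublevel0:
  assumes "convex_on D f" shows "convex {y \<in> D. f y \<le> 0}"
  unfolding convex_def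
proof (clarsimp)
  fix x y and u v :: real
  assume h: "x \<in> D" "f x \<le> 0" "y \<in> D" "f y \<le> 0" "0 \<le> u" "0 \<le> v" "u + v = 1"
  have cD: "convex D" using assms convex_on_imp_convex by blast
  have "f (u *\<^sub>R x + v *\<^sub>R y) \<le> u * f x + v * f y" using assms h unfolding convex_on_def by blast
  moreover have "u * f x \<le> 0" "v * f y \<le> 0" using h by (auto simp: mult_nonneg_nonpos)
  ultimately show "u *\<^sub>R x + v *\<^sub>R y \<in> D \<and> f (u *\<^sub>R x + v *\<^sub>R y) \<le> 0"
    using cD h by (auto simp: convexD)
qed

lemma lagr:
  fixes p :: "'a::real_vector \<Rightarrow> real"
  assumes "finite I" "convex D" "convex_on D p" "\<forall>i\<in>I. convex_on D (c i)" "xs \<in> D" "\<forall>i\<in>I. c i xs \<le> 0"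
    "\<forall>y\<in>D. (\<forall>i\<in>I. c i y \<le> 0) \<longrightarrow> p xs \<le> p y" "xb \<in> D" "\<forall>i\<in>I. c i xb < 0"
  shows "\<exists>l. (\<forall>i\<in>I. 0 \<le> l i \<and> l i * c i xs = 0) \<and> (\<forall>y\<in>D. p xs \<le> p y + (\<Sum>i\<in>I. l i * c i y))"
  using assms
proof (induction I arbitrary: D rule: finite_induct)
  case empty then show ?case by auto
next
  case (insert j I)
  define D' where "D' = {y \<in> D. c j y \<le> 0}"
  have cD': "convex D'" unfolding D'_def using convex_sublevel0 insert.prems(3) by auto
  have sub: "D' \<subseteq> D" unfolding D'_def by auto
  obtain l where l1: "\<forall>i\<in>I. 0 \<le> l i \<and> l i * c i xs = 0" and l2: "\<forall>y\<in>D'. p xs \<le> p y + (\<Sum>i\<in>I. l i * c i y)"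
  proof -
    have a1: "convex_on D' p" using convex_on_subset[OF insert.prems(2) sub cD'] .
    have a2: "\<forall>i\<in>I. convex_on D' (c i)" using convex_on_subset[OF _ sub cD'] insert.prems(3) by auto
    have a3: "xs \<in> D'" using insert.prems(4,5) unfolding D'_def by auto
    have a4: "\<forall>i\<in>I. c i xs \<le> 0" using insert.prems(5) by auto
    have a5: "\<forall>y\<in>D'. (\<forall>i\<in>I. c i y \<le> 0) \<longrightarrow> p xs \<le> p y" using insert.prems(6) unfolding D'_def by auto
    have a6: "xb \<in> D'" using insert.prems(7,8) unfolding D'_def by auto
    have a7: "\<forall>i\<in>I. c i xb < 0" using insert.prems(8) by auto
    show ?thesis using insert.IH[OF cD' a1 a2 a3 a4 a5 a6 a7] that by blast
  qed
  define p' where "p' = (\<lambda>y. p y + (\<Sum>i\<in>I. l i * c i y))"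
  have cp': "convex_on D p'" unfolding p'_def
    using insert.prems l1 insert.hyps by (intro convex_on_add convex_on_sum_fun) auto
  have p'xs: "p' xs = p xs" unfolding p'_def by (subst sum.neutral) (use l1 in auto)
  obtain lj where lj: "lj \<ge> 0" "lj * c j xs = 0" "\<forall>y\<in>D. p' xs \<le> p' y + lj * c j y"
    using lagr1[where D=D and p=p' and c="c j" and xs=xs and xb=xb] insert.prems(1) cp' insert.prems l2 p'xs unfolding D'_def p'_def
    by auto
  define l' where "l' = l(j := lj)"
  have "(\<Sum>i\<in>insert j I. l' i * c i y) = lj * c j y + (\<Sum>i\<in>I. l i * c i y)" for y
    using insert.hyps unfolding l'_def by (auto intro!: sum.cong)
  then have "\<forall>y\<in>D. p xs \<le> p y + (\<Sum>i\<in>insert j I. l' i * c i y)"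
    using lj(3) p'xs unfolding p'_def by (simp add: algebra_simps)
  moreover have "\<forall>i\<in>insert j I. 0 \<le> l' i \<and> l' i * c i xs = 0" using l1 lj insert.hyps unfolding l'_def by auto
  ultimately show ?case by blast
qed

lemma descent:
  fixes f :: "'a::real_inner \<Rightarrow> real"
  assumes cD: "convex D" and xD: "x \<in> D" and yD: "y \<in> D"
    and der: "\<forall>z\<in>D. (f has_derivative (\<lambda>h. inner (g z) h)) (at z)"
    and lip: "L-lipschitz_on D g"
  shows "f y \<le> f x + inner (g x) (y - x) + L / 2 * (norm (y - x))\<^sup>2"
proof -
  define d where "d = y - x"
  define h where "h = (\<lambda>t. f (x + t *\<^sub>R d) - t * inner (g x) d - L / 2 * t\<^sup>2 * (norm d)\<^sup>2)"
  have zD: "x + t *\<^sub>R d \<in> D" if "0 \<le> t" "t \<le> 1" for t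
  proof -
    have "x + t *\<^sub>R d = (1 - t) *\<^sub>R x + t *\<^sub>R y" by (simp add: d_def algebra_simps)
    then show ?thesis using cD xD yD that by (simp add: convex_alt)
  qed
  have L0: "0 \<le> L" using lip by (simp add: lipschitz_on_def)
  have hder: "(h has_real_derivative (inner (g (x + t *\<^sub>R d)) d - inner (g x) d - L * t * (norm d)\<^sup>2)) (at t)"
    if "0 \<le> t" "t \<le> 1" for t
  proof -
    have f1: "(f has_derivative (\<lambda>h. inner (g (x + t *\<^sub>R d)) h)) (at (x + t *\<^sub>R d))"
      using der zD[OF that] by blast
    have l1: "((\<lambda>s. x + s *\<^sub>R d) has_derivative (\<lambda>s. s *\<^sub>R d)) (at t)"
      by (auto intro!: derivative_eq_intros)
    have c1: "((\<lambda>s. f (x + s *\<^sub>R d)) has_derivative (\<lambda>s. inner (g (x + t *\<^sub>R d)) (s *\<^sub>R d))) (at t)"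
      using has_derivative_compose[OF l1 f1] by simp
    have c2: "((\<lambda>s. f (x + s *\<^sub>R d)) has_real_derivative (inner (g (x + t *\<^sub>R d)) d)) (at t)"
    proof -
      have eq: "(\<lambda>s. inner (g (x + t *\<^sub>R d)) (s *\<^sub>R d)) = (*) (inner (g (x + t *\<^sub>R d)) d)"
        by (auto simp: mult.commute)
      show ?thesis unfolding has_field_derivative_def using c1 unfolding eq .
    qed
    have c3: "((\<lambda>s. s * inner (g x) d) has_real_derivative inner (g x) d) (at t)"
      by (auto intro!: derivative_eq_intros)
    have c4: "((\<lambda>s. L / 2 * s\<^sup>2 * (norm d)\<^sup>2) has_real_derivative L * t * (norm d)\<^sup>2) (at t)"
      by (auto intro!: derivative_eq_intros)
    show ?thesis unfolding h_def by (rule DERIV_diff[OF DERIV_diff[OF c2 c3] c4])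
  qed
  have hneg: "inner (g (x + t *\<^sub>R d)) d - inner (g x) d - L * t * (norm d)\<^sup>2 \<le> 0"
    if "0 \<le> t" "t \<le> 1" for t
  proof -
    have e1: "inner (g (x + t *\<^sub>R d)) d - inner (g x) d = inner (g (x + t *\<^sub>R d) - g x) d"
      by (simp add: inner_diff_left)
    have e2: "inner (g (x + t *\<^sub>R d) - g x) d \<le> norm (g (x + t *\<^sub>R d) - g x) * norm d" by (rule norm_cauchy_schwarz)
    have "norm (g (x + t *\<^sub>R d) - g x) \<le> L * norm ((x + t *\<^sub>R d) - x)"
      using lip zD[OF that] xD unfolding lipschitz_on_def dist_norm by blast
    then have e3: "norm (g (x + t *\<^sub>R d) - g x) \<le> L * t * norm d" using that by simp
    have e4: "norm (g (x + t *\<^sub>R d) - g x) * norm d \<le> L * t * norm d * norm d"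
      using e3 by (simp add: mult_right_mono)
    show ?thesis using e1 e2 e4 by (simp add: power2_eq_square)
  qed
  have q1: "\<exists>y. DERIV h t :> y \<and> y \<le> 0" if "0 < t" "t < 1" for t
      using hder hneg that by (meson less_imp_le)
  have q2: "continuous_on {0..1} h"
      using hder by (meson DERIV_isCont atLeastAtMost_iff continuous_at_imp_continuous_on)
  have "h 1 \<le> h 0"
    using DERIV_nonpos_imp_decreasing_open[of 0 1 h] q1 q2 by simp
  then show ?thesis unfolding h_def d_def by simp
qed

lemma cvx_lin:
  fixes a :: "'a::real_inner"
  assumes "convex S" shows "convex_on S (\<lambda>y. inner a y + b)"
  using assms unfolding convex_on_def
  by (auto simp: inner_add_right algebra_simps simp flip: distrib_right)

lemma cvx_sq:
  fixes z :: "'a::real_inner"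
  shows "convex_on UNIV (\<lambda>y. (norm (y - z))\<^sup>2)"
proof (rule convex_onI)
  fix t :: real and u v :: 'a
  assume t: "0 < t" "t < 1"
  have e: "(1 - t) *\<^sub>R u + t *\<^sub>R v - z = (1 - t) *\<^sub>R (u - z) + t *\<^sub>R (v - z)"
    by (simp add: algebra_simps)
  define a where "a = u - z"
  define b where "b = v - z"
  have "(norm ((1 - t) *\<^sub>R a + t *\<^sub>R b))\<^sup>2 = (1-t)^2 * inner a a + 2 * t * (1 - t) * inner a b + t^2 * inner b b"
    unfolding power2_norm_eq_inner by (simp add: inner_add_left inner_add_right inner_commute power2_eq_square algebra_simps)
  moreover have "0 \<le> t * (1 - t) * (inner a a - 2 * inner a b + inner b b)"
  proof -
    have "(norm (a - b))\<^sup>2 = inner a a - 2 * inner a b + inner b b"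
      by (simp add: power2_norm_eq_inner inner_diff_left inner_diff_right inner_commute)
    moreover have "0 \<le> t * (1 - t) * (norm (a - b))\<^sup>2" using t by simp
    ultimately show ?thesis by simp
  qed
  moreover have "(1 - t) * inner a a + t * inner b b - ((1-t)^2 * inner a a + 2 * t * (1 - t) * inner a b + t^2 * inner b b)
     = t * (1 - t) * (inner a a - 2 * inner a b + inner b b)"
    by (simp add: power2_eq_square algebra_simps)
  ultimately have "(norm ((1 - t) *\<^sub>R a + t *\<^sub>R b))\<^sup>2 \<le> (1 - t) * inner a a + t * inner b b"
    by linarith
  then show "(norm ((1 - t) *\<^sub>R u + t *\<^sub>R v - z))\<^sup>2 \<le> (1 - t) * (norm (u - z))\<^sup>2 + t * (norm (v - z))\<^sup>2"
    unfolding e a_def[symmetric] b_def[symmetric] by (simp add: power2_norm_eq_inner)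
qed simp

lemma amgm:
  fixes a b \<beta> :: real
  assumes "0 < \<beta>"
  shows "a * b \<le> a\<^sup>2 / (2 * \<beta>) + \<beta> / 2 * b\<^sup>2"
proof -
  have "0 \<le> (a - \<beta> * b)\<^sup>2" by simp
  then have "2 * \<beta> * (a * b) \<le> a\<^sup>2 + \<beta>\<^sup>2 * b\<^sup>2" by (simp add: power2_eq_square algebra_simps)
  then have "(2 * \<beta> * (a * b)) / (2 * \<beta>) \<le> (a\<^sup>2 + \<beta>\<^sup>2 * b\<^sup>2) / (2 * \<beta>)"
    by (intro divide_right_mono) (use assms in auto)
  then show ?thesis using assms by (simp add: add_divide_distrib power2_eq_square)
qed

lemma small_t:
  fixes A c :: real
  assumes "0 \<le> c" "\<forall>t. 0 < t \<and> t \<le> 1 \<longrightarrow> A \<le> c * t"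
  shows "A \<le> 0"
proof (rule ccontr)
  assume "\<not> A \<le> 0"
  then have A: "A > 0" by simp
  define t where "t = min 1 (A / (2 * (c + 1)))"
  have t0: "0 < t" "t \<le> 1" using A assms(1) by (auto simp: t_def)
  have "c * t \<le> c * (A / (2 * (c + 1)))" using assms(1) by (intro mult_left_mono) (auto simp: t_def)
  also have "\<dots> = (c / (c + 1)) * (A / 2)" using assms(1) by (simp add: field_simps)
  also have "\<dots> \<le> A / 2"
    by (rule mult_left_le_one_le) (use A assms(1) in auto)
  also have "\<dots> < A" using A by simp
  finally show False using assms(2) t0 by force
qed

theorem mainTheorem9:
  fixes m :: nat
    and f chi :: "nat \<Rightarrow> 'a::euclidean_space \<Rightarrow> real"
    and grad :: "nat \<Rightarrow> 'a \<Rightarrow> 'a"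
    and L :: "nat \<Rightarrow> real"
    and D :: "'a set"
    and \<eta> :: "nat \<Rightarrow> real"
    and P :: "'s measure"
    and F :: "'a \<Rightarrow> 's \<Rightarrow> real"
    and gradF :: "'a \<Rightarrow> 's \<Rightarrow> 'a"
    and \<sigma> :: real
    and x :: "nat \<Rightarrow> 'a"
    and eta :: "nat \<Rightarrow> nat \<Rightarrow> real"
    and b :: "nat \<Rightarrow> nat"
    and \<xi> :: "nat \<Rightarrow> nat \<Rightarrow> 's"
    and G :: "nat \<Rightarrow> 'a"
    and \<gamma> :: "nat \<Rightarrow> real"
  defines "\<psi> \<equiv> (\<lambda>i y. f i y + chi i y)"
  defines "X \<equiv> {y \<in> D. \<forall>i\<in>{1..m}. \<psi> i y \<le> \<eta> i}"
  \<comment> \<open>standing assumptions of problem (P); D = dom chi_0\<close>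
  assumes chi0: "proper_convex_lsc D (chi 0)"
    and chi_i: "\<forall>i\<in>{1..m}. convex_on UNIV (chi i) \<and> continuous_on D (chi i)"
    and f_diff: "\<forall>i\<in>{0..m}. \<forall>y\<in>D. (f i has_derivative (\<lambda>h. inner (grad i y) h)) (at y)"
    and f_lip: "\<forall>i\<in>{0..m}. (L i)-lipschitz_on D (grad i)"
    and opt_finite: "bdd_below (\<psi> 0 ` X)"
    and X_ne: "X \<noteq> {}"
    and X_compact: "compact X"
  \<comment> \<open>stochastic setting\<close>
    and P_prob: "prob_space P"
    and f0_exp: "\<forall>y. integrable P (F y) \<and> f 0 y = (\<integral>s. F y s \<partial>P)"
    and F_diff: "\<forall>s\<in>space P. \<forall>y\<in>D. ((\<lambda>z. F z s) has_derivative (\<lambda>h. inner (gradF y s) h)) (at y)"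
    and unbiased: "\<forall>y\<in>D. integrable P (gradF y) \<and> (\<integral>s. gradF y s \<partial>P) = grad 0 y"
    and var_bound: "\<forall>y\<in>D. integrable P (\<lambda>s. (norm (gradF y s - grad 0 y))\<^sup>2) \<and>
                       (\<integral>s. (norm (gradF y s - grad 0 y))\<^sup>2 \<partial>P) \<le> \<sigma>\<^sup>2"
  \<comment> \<open>Algorithm LCSPG\<close>
    and x0: "x 0 \<in> D"
    and eta0: "\<forall>i\<in>{1..m}. \<psi> i (x 0) < eta 0 i \<and> eta 0 i < \<eta> i"
    and eta_step: "\<forall>k. \<forall>i\<in>{1..m}. eta k i < eta (Suc k) i \<and> eta (Suc k) i < \<eta> i"
    and batch: "\<forall>k. 1 \<le> b k \<and> (\<forall>j\<in>{1..b k}. \<xi> j k \<in> space P)"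
    and G_def: "\<forall>k. G k = (1 / real (b k)) *\<^sub>R (\<Sum>j\<in>{1..b k}. gradF (x k) (\<xi> j k))"
    and gamma: "\<forall>k. \<gamma> k > L 0 / 2"
    and step: "\<forall>k. x (Suc k) \<in> D \<and>
         (\<forall>i\<in>{1..m}. con_model (f i) (grad i (x k)) (L i) (chi i) (x k) (x (Suc k)) \<le> eta k i) \<and>
         (\<forall>y\<in>D. (\<forall>i\<in>{1..m}. con_model (f i) (grad i (x k)) (L i) (chi i) (x k) y \<le> eta k i) \<longrightarrow>
             obj_model (G k) (\<gamma> k) (x k) (chi 0) (x (Suc k))
               \<le> obj_model (G k) (\<gamma> k) (x k) (chi 0) y)"
  shows "\<forall>k.
     (\<exists>lam :: nat \<Rightarrow> real. (\<forall>i\<in>{1..m}. 0 \<le> lam i) \<and>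
        (\<exists>g0 g. g0 \<in> subdiff D (obj_model (G k) (\<gamma> k) (x k) (chi 0)) (x (Suc k)) \<and>
           (\<forall>i\<in>{1..m}. g i \<in> subdiff UNIV (con_model (f i) (grad i (x k)) (L i) (chi i) (x k)) (x (Suc k))) \<and>
           g0 + (\<Sum>i\<in>{1..m}. lam i *\<^sub>R g i) = 0) \<and>
        (\<forall>i\<in>{1..m}. lam i * (con_model (f i) (grad i (x k)) (L i) (chi i) (x k) (x (Suc k)) - eta k i) = 0))
   \<and> (\<forall>\<beta>. 0 < \<beta> \<and> \<beta> < 2 * \<gamma> k - L 0 \<longrightarrow>
        \<psi> 0 (x (Suc k)) \<le> \<psi> 0 (x k) - (2 * \<gamma> k - \<beta> - L 0) / 2 * (norm (x (Suc k) - x k))\<^sup>2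
                           + (norm (G k - grad 0 (x k)))\<^sup>2 / (2 * \<beta>))"
proof -
  have cD: "convex D" and cchi0: "convex_on D (chi 0)"
    using chi0 unfolding proper_convex_lsc_def by auto
  have Lnn: "0 \<le> L i" if "i \<in> {0..m}" for i using f_lip that by (auto simp: lipschitz_on_def)
  have xD: "x k \<in> D" for k using x0 step by (cases k) auto
  have conself: "con_model (f i) (grad i (x k)) (L i) (chi i) (x k) (x k) = \<psi> i (x k)" for i k
    by (simp add: con_model_def \<psi>_def)
  have slater: "con_model (f i) (grad i (x k)) (L i) (chi i) (x k) (x k) < eta k i" if i: "i \<in> {1..m}" for i k
  proof (cases k)
    case 0 then show ?thesis using eta0 i conself by auto
  next
    case (Suc j)
    have "f i (x (Suc j)) \<le> f i (x j) + inner (grad i (x j)) (x (Suc j) - x j) + L i / 2 * (norm (x (Suc j) - x j))\<^sup>2"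
      by (rule descent[OF cD xD xD]) (use f_diff f_lip i in auto)
    then have "\<psi> i (x (Suc j)) \<le> con_model (f i) (grad i (x j)) (L i) (chi i) (x j) (x (Suc j))"
      by (simp add: con_model_def \<psi>_def)
    also have "\<dots> \<le> eta j i" using step i by auto
    also have "\<dots> < eta (Suc j) i" using eta_step i by auto
    finally show ?thesis using Suc conself by simp
  qed
  show ?thesis
  proof (rule allI, rule conjI)
    fix k
    define obj where "obj = obj_model (G k) (\<gamma> k) (x k) (chi 0)"
    define con where "con = (\<lambda>i. con_model (f i) (grad i (x k)) (L i) (chi i) (x k))"
    define xp where "xp = x (Suc k)"
    define xk where "xk = x k"
    have L00: "0 \<le> L 0" by (rule Lnn) simp
    have gpos: "0 < \<gamma> k" using gamma[rule_format, of k] L00 by linarith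
    have cobj: "convex_on D obj"
    proof -
      have "convex_on D (\<lambda>y. (inner (G k) y + 0) + \<gamma> k / 2 * (norm (y - xk))\<^sup>2 + chi 0 y)"
        using cD cchi0 gpos
        by (intro convex_on_add cvx_lin convex_on_cmul convex_on_subset[OF cvx_sq]) auto
      then show ?thesis unfolding obj_def obj_model_def xk_def by simp
    qed
    have ccon: "convex_on UNIV (con i)" if i: "i \<in> {1..m}" for i
    proof -
      have "convex_on UNIV (\<lambda>y. (inner (grad i xk) y + (f i xk - inner (grad i xk) xk)) + L i / 2 * (norm (y - xk))\<^sup>2 + chi i y)"
        using chi_i Lnn[of i] i
        by (intro convex_on_add cvx_lin convex_on_cmul cvx_sq) auto
      moreover have "con i = (\<lambda>y. (inner (grad i xk) y + (f i xk - inner (grad i xk) xk)) + L i / 2 * (norm (y - xk))\<^sup>2 + chi i y)"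
        unfolding con_def con_model_def xk_def by (auto simp: inner_diff_right)
      ultimately show ?thesis by simp
    qed
    have stepk: "xp \<in> D" "\<forall>i\<in>{1..m}. con i xp \<le> eta k i"
      "\<forall>y\<in>D. (\<forall>i\<in>{1..m}. con i y \<le> eta k i) \<longrightarrow> obj xp \<le> obj y"
      using step unfolding con_def obj_def xp_def by auto
    have slk: "\<forall>i\<in>{1..m}. con i xk < eta k i" using slater unfolding con_def xk_def by auto
    obtain l where l1: "\<forall>i\<in>{1..m}. 0 \<le> l i \<and> l i * (con i xp - eta k i) = 0"
      and l2: "\<forall>y\<in>D. obj xp \<le> obj y + (\<Sum>i\<in>{1..m}. l i * (con i y - eta k i))"
    proof -
      have "\<exists>l. (\<forall>i\<in>{1..m}. 0 \<le> l i \<and> l i * (\<lambda>i y. con i y - eta k i) i xp = 0) \<and>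
          (\<forall>y\<in>D. obj xp \<le> obj y + (\<Sum>i\<in>{1..m}. l i * (\<lambda>i y. con i y - eta k i) i y))"
      proof (rule lagr[where xb = xk and c = "\<lambda>i y. con i y - eta k i" and p = obj and xs = xp and D = D])
        show "\<forall>i\<in>{1..m}. convex_on D (\<lambda>y. con i y - eta k i)"
        proof
          fix i assume "i \<in> {1..m}"
          then have "convex_on D (con i)" using ccon cD convex_on_subset[of UNIV _ D] by blast
          moreover have "concave_on D (\<lambda>y. eta k i)" using cD by (simp add: concave_on_const)
          ultimately show "convex_on D (\<lambda>y. con i y - eta k i)" by (rule convex_on_diff)
        qed
        show "finite {1..m}" by simp
        show "convex D" by (rule cD)
        show "convex_on D obj" by (rule cobj)
        show "xp \<in> D" by (rule stepk(1))
        show "\<forall>i\<in>{1..m}. con i xp - eta k i \<le> 0" using stepk(2) by simp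
        show "\<forall>y\<in>D. (\<forall>i\<in>{1..m}. con i y - eta k i \<le> 0) \<longrightarrow> obj xp \<le> obj y" using stepk(3) by simp
        show "xk \<in> D" unfolding xk_def by (rule xD)
        show "\<forall>i\<in>{1..m}. con i xk - eta k i < 0" using slk by simp
      qed
      then show ?thesis using that by blast
    qed
    have slack: "(\<Sum>i\<in>{1..m}. l i * con i xp) = (\<Sum>i\<in>{1..m}. l i * eta k i)"
      using l1 by (intro sum.cong) (auto simp: algebra_simps)
    have opt: "\<forall>y\<in>D. obj xp + (\<Sum>i\<in>{1..m}. l i * con i xp) \<le> obj y + (\<Sum>i\<in>{1..m}. l i * con i y)"
    proof
      fix y assume "y \<in> D"
      then have "obj xp \<le> obj y + (\<Sum>i\<in>{1..m}. l i * (con i y - eta k i))" using l2 by blast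
      also have "(\<Sum>i\<in>{1..m}. l i * (con i y - eta k i)) = (\<Sum>i\<in>{1..m}. l i * con i y) - (\<Sum>i\<in>{1..m}. l i * eta k i)"
        by (simp add: right_diff_distrib sum_subtractf)
      finally show "obj xp + (\<Sum>i\<in>{1..m}. l i * con i xp) \<le> obj y + (\<Sum>i\<in>{1..m}. l i * con i y)"
        using slack by simp
    qed
    obtain g0 g where g0: "g0 \<in> subdiff D obj xp" and g: "\<forall>i\<in>{1..m}. g i \<in> subdiff UNIV (con i) xp"
      and gs: "g0 + (\<Sum>i\<in>{1..m}. l i *\<^sub>R g i) = 0"
    proof -
      have h1: "\<forall>i\<in>{1..m}. convex_on UNIV (con i)" using ccon by blast
      have h2: "\<forall>i\<in>{1..m}. 0 \<le> l i" using l1 by blast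
      show ?thesis using subsum[OF _ cD cobj h1 h2 stepk(1) opt] that by blast
    qed
    show "\<exists>lam :: nat \<Rightarrow> real. (\<forall>i\<in>{1..m}. 0 \<le> lam i) \<and>
        (\<exists>g0 g. g0 \<in> subdiff D (obj_model (G k) (\<gamma> k) (x k) (chi 0)) (x (Suc k)) \<and>
           (\<forall>i\<in>{1..m}. g i \<in> subdiff UNIV (con_model (f i) (grad i (x k)) (L i) (chi i) (x k)) (x (Suc k))) \<and>
           g0 + (\<Sum>i\<in>{1..m}. lam i *\<^sub>R g i) = 0) \<and>
        (\<forall>i\<in>{1..m}. lam i * (con_model (f i) (grad i (x k)) (L i) (chi i) (x k) (x (Suc k)) - eta k i) = 0)"
    proof -
      have A: "(\<forall>i\<in>{1..m}. 0 \<le> l i) \<and> (\<exists>g0 g. g0 \<in> subdiff D obj xp \<and> (\<forall>i\<in>{1..m}. g i \<in> subdiff UNIV (con i) xp) \<and>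
          g0 + (\<Sum>i\<in>{1..m}. l i *\<^sub>R g i) = 0) \<and> (\<forall>i\<in>{1..m}. l i * (con i xp - eta k i) = 0)"
        using l1 g0 g gs by blast
      show ?thesis using A unfolding obj_def con_def xp_def by (intro exI[of _ l])
    qed
    show "\<forall>\<beta>. 0 < \<beta> \<and> \<beta> < 2 * \<gamma> k - L 0 \<longrightarrow>
        \<psi> 0 (x (Suc k)) \<le> \<psi> 0 (x k) - (2 * \<gamma> k - \<beta> - L 0) / 2 * (norm (x (Suc k) - x k))\<^sup>2
                           + (norm (G k - grad 0 (x k)))\<^sup>2 / (2 * \<beta>)"
    proof (intro allI impI)
      fix \<beta> assume \<beta>: "0 < \<beta> \<and> \<beta> < 2 * \<gamma> k - L 0"
      define \<phi> where "\<phi> = (\<lambda>y. inner (G k) y + chi 0 y)"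
      define dd where "dd = (norm (xp - xk))\<^sup>2"
      have cphi: "convex_on D \<phi>"
      proof -
        have "convex_on D (\<lambda>y. (inner (G k) y + 0) + chi 0 y)"
          using cD cchi0 by (intro convex_on_add cvx_lin) auto
        then show ?thesis unfolding \<phi>_def by simp
      qed
      have objphi: "obj y = \<phi> y + \<gamma> k / 2 * (norm (y - xk))\<^sup>2" for y
        unfolding obj_def obj_model_def \<phi>_def xk_def by simp
      have tt: "\<phi> xp - \<phi> xk + \<gamma> k * dd \<le> \<gamma> k / 2 * dd * t" if t: "0 < t" "t \<le> 1" for t
      proof -
        define yt where "yt = (1 - t) *\<^sub>R xp + t *\<^sub>R xk"
        have ytD: "yt \<in> D" unfolding yt_def using cD stepk(1) xD[of k] t by (simp add: convex_alt xk_def)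
        have "con i yt \<le> eta k i" if i: "i \<in> {1..m}" for i
        proof -
          have "con i yt \<le> (1 - t) * con i xp + t * con i xk"
            unfolding yt_def using convex_onD[OF ccon[OF i]] t by simp
          also have "\<dots> \<le> (1 - t) * eta k i + t * eta k i"
          proof -
            have "con i xp \<le> eta k i" using stepk(2) i by blast
            moreover have "con i xk \<le> eta k i" using slk i less_imp_le by blast
            ultimately show ?thesis using t by (intro add_mono mult_left_mono) auto
          qed
          finally show ?thesis by (simp add: algebra_simps)
        qed
        then have "obj xp \<le> obj yt" using stepk(3) ytD by blast
        moreover have "yt - xk = (1 - t) *\<^sub>R (xp - xk)" unfolding yt_def by (simp add: algebra_simps)
        then have "(norm (yt - xk))\<^sup>2 = (1 - t)\<^sup>2 * dd" using t by (simp add: dd_def power_mult_distrib)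
        moreover have "\<phi> yt \<le> (1 - t) * \<phi> xp + t * \<phi> xk"
          unfolding yt_def using convex_onD[OF cphi] t stepk(1) xD[of k] by (simp add: xk_def)
        ultimately have "\<phi> xp + \<gamma> k / 2 * dd \<le> (1 - t) * \<phi> xp + t * \<phi> xk + \<gamma> k / 2 * ((1 - t)\<^sup>2 * dd)"
          using objphi unfolding dd_def by (smt (verit))
        then have "t * (\<phi> xp - \<phi> xk + \<gamma> k * dd) \<le> t * (\<gamma> k / 2 * dd * t)"
          by (simp add: power2_eq_square algebra_simps)
        then show ?thesis using t by simp
      qed
      have phid: "\<phi> xp - \<phi> xk + \<gamma> k * dd \<le> 0"
        by (rule small_t[of "\<gamma> k / 2 * dd"]) (use tt gpos in \<open>auto simp: dd_def\<close>)
      have f0d: "f 0 xp \<le> f 0 xk + inner (grad 0 xk) (xp - xk) + L 0 / 2 * dd"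
        unfolding dd_def by (rule descent[OF cD]) (use f_diff f_lip xD stepk(1) xk_def in auto)
      have cs: "inner (grad 0 xk - G k) (xp - xk) \<le> norm (G k - grad 0 xk) * norm (xp - xk)"
        using norm_cauchy_schwarz[of "grad 0 xk - G k" "xp - xk"] by (simp add: norm_minus_commute)
      have am: "norm (G k - grad 0 xk) * norm (xp - xk) \<le> (norm (G k - grad 0 xk))\<^sup>2 / (2 * \<beta>) + \<beta> / 2 * dd"
        unfolding dd_def using amgm \<beta> by blast
      have "\<psi> 0 xp \<le> \<psi> 0 xk - (2 * \<gamma> k - \<beta> - L 0) / 2 * dd + (norm (G k - grad 0 xk))\<^sup>2 / (2 * \<beta>)"
      proof -
        have e1: "inner (grad 0 xk - G k) (xp - xk) = inner (grad 0 xk) (xp - xk) - inner (G k) xp + inner (G k) xk"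
          by (simp add: inner_diff_left inner_diff_right)
        have e2: "(2 * \<gamma> k - \<beta> - L 0) / 2 * dd = \<gamma> k * dd - \<beta> / 2 * dd - L 0 / 2 * dd"
          by (simp add: left_diff_distrib diff_divide_distrib)
        have ph: "inner (G k) xp + chi 0 xp - (inner (G k) xk + chi 0 xk) + \<gamma> k * dd \<le> 0"
          using phid unfolding \<phi>_def .
        show ?thesis unfolding \<psi>_def e2 using ph f0d cs am e1 by linarith
      qed
      then show "\<psi> 0 (x (Suc k)) \<le> \<psi> 0 (x k) - (2 * \<gamma> k - \<beta> - L 0) / 2 * (norm (x (Suc k) - x k))\<^sup>2
                           + (norm (G k - grad 0 (x k)))\<^sup>2 / (2 * \<beta>)"
        unfolding xp_def xk_def dd_def .
    qed
  qed
qed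

end
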